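(* Let $n$ be an even positive integer, let $0<\epsilon\le \frac1{18}$, and let $f_\epsilon:\mathbb{R}^n\to\mathbb{R}$ be \[ f_\epsilon(\mathbf{x})=\frac{1-\epsilon}{2}\sum_{i=1}^n x_i^2+\frac{\epsilon}{2}\Big(\sum_{i=1}^n x_i\Big)^2 , \] whose minimum point is $\mathbf{x}^*=\mathbf{0}$. Let $\Gamma\ge 1$. Let $\mathbf{x}^0$ be the point whose even-indexed coordinates equal $+1$ and whose odd-indexed coordinates equal $-1$. Run sequential stochastic coordinate descent for $t$ steps: at each step $s=1,\dots,t$ a coordinate $j\in\{1,\dots,n\}$ is chosen uniformly at random, independently of all previous choices, and one sets $x^s_j=x^{s-1}_j-\frac{1}{\Gamma}\nabla_j f_\epsilon(\mathbf{x}^{s-1})$ and $x^s_k=x^{s-1}_k$ for $k\ne j$. Then \[ \mathbb{E}\big[f_\epsilon(\mathbf{x}^t)-f_\epsilon(\mathbf{x}^* )\big]\ \ge\ \Big(1-\frac{2}{n}\cdot\frac{1-\epsilon}{\Gamma}\Big)^{t}\big(f_\epsilon(\mathbf{x}^0)-f_\epsilon(\mathbf{x}^* )\big). \]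
   Context: Here $\nabla_j f_\epsilon(\mathbf{x})=(1-\epsilon)x_j+\epsilon\sum_{i=1}^n x_i$. The parameter $\Gamma$ is the step-size parameter, required to satisfy $\Gamma\ge L_{\max}$, where $L_{\max}=1$ is the largest coordinate-wise Lipschitz constant of $\nabla_j f_\epsilon$ in $x_j$. *)

theory Defs
  imports "HOL-Probability.Probability"
begin

text \<open>Points of R^n are represented as functions nat => real, using coordinates 1..n.\<close>

definition f_eps :: "real \<Rightarrow> nat \<Rightarrow> (nat \<Rightarrow> real) \<Rightarrow> real" where
  "f_eps \<epsilon> n x = (1 - \<epsilon>) / 2 * (\<Sum>i=1..n. (x i)^2) + \<epsilon> / 2 * (\<Sum>i=1..n. x i)^2"

definition grad_eps :: "real \<Rightarrow> nat \<Rightarrow> (nat \<Rightarrow> real) \<Rightarrow> nat \<Rightarrow> real" where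
  "grad_eps \<epsilon> n x j = (1 - \<epsilon>) * x j + \<epsilon> * (\<Sum>i=1..n. x i)"

definition cd_step :: "real \<Rightarrow> nat \<Rightarrow> real \<Rightarrow> (nat \<Rightarrow> real) \<Rightarrow> nat \<Rightarrow> (nat \<Rightarrow> real)" where
  "cd_step \<epsilon> n \<Gamma> x j = x(j := x j - grad_eps \<epsilon> n x j / \<Gamma>)"

definition cd_run :: "real \<Rightarrow> nat \<Rightarrow> real \<Rightarrow> (nat \<Rightarrow> real) \<Rightarrow> nat list \<Rightarrow> (nat \<Rightarrow> real)" where
  "cd_run \<epsilon> n \<Gamma> x js = foldl (cd_step \<epsilon> n \<Gamma>) x js"

definition x_start :: "nat \<Rightarrow> real" where
  "x_start i = (if even i then 1 else -1)"

text \<open>Uniform independent choice of t coordinates in {1..n}: uniform distribution on sequences.\<close>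
definition choice_seqs :: "nat \<Rightarrow> nat \<Rightarrow> nat list set" where
  "choice_seqs n t = {js. length js = t \<and> set js \<subseteq> {1..n}}"

end

theory Submission
  imports Defs
begin

lemma xs_sum: "(\<Sum>i=1..2*k. x_start i) = 0"
  by (induction k) (auto simp: x_start_def)

lemma C_Suc: "choice_seqs n (Suc t) = (\<lambda>(js,j). js@[j]) ` (choice_seqs n t \<times> {1..n})"
proof
  show "choice_seqs n (Suc t) \<subseteq> (\<lambda>(js,j). js@[j]) ` (choice_seqs n t \<times> {1..n})"
  proof
    fix js assume a: "js \<in> choice_seqs n (Suc t)"
    then have ne: "js \<noteq> []" by (auto simp: choice_seqs_def)
    have e: "js = butlast js @ [last js]" using ne by simp
    have "set js \<subseteq> {1..n}" "length js = Suc t" using a by (auto simp: choice_seqs_def)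
    moreover have "last js \<in> {1..n}" using ne \<open>set js \<subseteq> {1..n}\<close> last_in_set by blast
    ultimately have "butlast js \<in> choice_seqs n t" "last js \<in> {1..n}"
      using ne by (auto simp: choice_seqs_def dest: in_set_butlastD)
    then show "js \<in> (\<lambda>(js,j). js@[j]) ` (choice_seqs n t \<times> {1..n})"
      using e by (metis (no_types, lifting) SigmaI case_prod_conv image_eqI)
  qed
qed (auto simp: choice_seqs_def)

lemma fin_C: "finite (choice_seqs n t)"
proof -
  have "finite {js. set js \<subseteq> {1..n} \<and> length js = t}"
    by (rule finite_lists_length_eq) simp
  then show ?thesis unfolding choice_seqs_def by (simp add: conj_commute)
qed

lemma sum_C_Suc: "(\<Sum>js\<in>choice_seqs n (Suc t). h js) = (\<Sum>js\<in>choice_seqs n t. \<Sum>j=1..n. h (js@[j]))"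
proof -
  have inj: "inj_on (\<lambda>(js,j). js@[j]) (choice_seqs n t \<times> {1..n})"
    by (auto simp: inj_on_def)
  have "(\<Sum>js\<in>choice_seqs n (Suc t). h js) = (\<Sum>p\<in>choice_seqs n t \<times> {1..n}. h ((\<lambda>(js,j). js@[j]) p))"
    unfolding C_Suc by (subst sum.reindex[OF inj]) (simp add: comp_def)
  also have "\<dots> = (\<Sum>js\<in>choice_seqs n t. \<Sum>j=1..n. h (js@[j]))"
    by (simp only: sum.cartesian_product) (simp add: case_prod_beta)
  finally show ?thesis .
qed

lemma step_sum:
  assumes "i \<in> {1..n}"
  shows "(\<Sum>j=1..n. cd_step \<epsilon> n \<Gamma> x j i) = real n * x i - grad_eps \<epsilon> n x i / \<Gamma>"
proof -
  have "(\<Sum>j=1..n. cd_step \<epsilon> n \<Gamma> x j i) = (\<Sum>j=1..n. x i - (if j = i then grad_eps \<epsilon> n x i / \<Gamma> else 0))"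
    by (rule sum.cong) (auto simp: cd_step_def)
  also have "\<dots> = real n * x i - grad_eps \<epsilon> n x i / \<Gamma>"
    using assms by (simp add: sum_subtractf)
  finally show ?thesis .
qed

lemma mean_lemma:
  assumes "even n"
  shows "\<forall>i\<in>{1..n}. (\<Sum>js\<in>choice_seqs n t. cd_run \<epsilon> n \<Gamma> x_start js i)
           = (real n - (1 - \<epsilon>) / \<Gamma>) ^ t * x_start i"
proof (induction t)
  case 0
  have "choice_seqs n 0 = {[]}" by (auto simp: choice_seqs_def)
  then show ?case by (simp add: cd_run_def)
next
  case (Suc t)
  define X where "X = cd_run \<epsilon> n \<Gamma> x_start"
  define c where "c = real n - (1 - \<epsilon>) / \<Gamma>"
  obtain k where k: "n = 2*k" using assms by blast
  have IH: "\<And>i. i\<in>{1..n} \<Longrightarrow> (\<Sum>js\<in>choice_seqs n t. X js i) = c ^ t * x_start i"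
    using Suc X_def c_def by auto
  have S0: "(\<Sum>js\<in>choice_seqs n t. \<Sum>k=1..n. X js k) = 0"
  proof -
    have "(\<Sum>js\<in>choice_seqs n t. \<Sum>k=1..n. X js k) = (\<Sum>k=1..n. \<Sum>js\<in>choice_seqs n t. X js k)"
      by (rule sum.swap)
    also have "\<dots> = (\<Sum>k=1..n. c ^ t * x_start k)" using IH by simp
    also have "\<dots> = c ^ t * (\<Sum>k=1..n. x_start k)" by (simp add: sum_distrib_left)
    also have "\<dots> = 0" using xs_sum k by simp
    finally show ?thesis .
  qed
  show ?case
  proof
    fix i assume i: "i \<in> {1..n}"
    have "(\<Sum>js\<in>choice_seqs n (Suc t). X js i) = (\<Sum>js\<in>choice_seqs n t. \<Sum>j=1..n. X (js@[j]) i)"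
      by (rule sum_C_Suc)
    also have "\<dots> = (\<Sum>js\<in>choice_seqs n t. \<Sum>j=1..n. cd_step \<epsilon> n \<Gamma> (X js) j i)"
      by (simp add: X_def cd_run_def)
    also have "\<dots> = (\<Sum>js\<in>choice_seqs n t. real n * X js i - ((1-\<epsilon>) * X js i + \<epsilon> * (\<Sum>k=1..n. X js k)) / \<Gamma>)"
      by (intro sum.cong refl) (subst step_sum[OF i], simp add: grad_eps_def)
    also have "\<dots> = real n * (\<Sum>js\<in>choice_seqs n t. X js i) - ((1-\<epsilon>) * (\<Sum>js\<in>choice_seqs n t. X js i) + \<epsilon> * (\<Sum>js\<in>choice_seqs n t. \<Sum>k=1..n. X js k)) / \<Gamma>"
      by (simp add: sum_subtractf sum_divide_distrib add_divide_distrib sum.distrib sum_distrib_left)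
    also have "\<dots> = c ^ Suc t * x_start i"
      using IH[OF i] S0 by (simp add: c_def algebra_simps diff_divide_distrib)
    finally show "(\<Sum>js\<in>choice_seqs n (Suc t). cd_run \<epsilon> n \<Gamma> x_start js i) = (real n - (1 - \<epsilon>) / \<Gamma>) ^ Suc t * x_start i"
      by (simp add: X_def c_def)
  qed
qed

lemma lin_bound:
  assumes "\<epsilon> \<le> 1" "0 \<le> \<epsilon>"
  shows "f_eps \<epsilon> n x \<ge> (1-\<epsilon>) * (\<Sum>i=1..n. m i * x i) - (1-\<epsilon>)/2 * (\<Sum>i=1..n. (m i)^2)"
proof -
  have "0 \<le> (\<Sum>i=1..n. (x i - m i)^2)" by (simp add: sum_nonneg)
  also have "\<dots> = (\<Sum>i=1..n. (x i)^2) - 2 * (\<Sum>i=1..n. m i * x i) + (\<Sum>i=1..n. (m i)^2)"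
    by (simp add: power2_diff sum.distrib sum_subtractf sum_distrib_left algebra_simps)
  finally have h: "2 * (\<Sum>i=1..n. m i * x i) - (\<Sum>i=1..n. (m i)^2) \<le> (\<Sum>i=1..n. (x i)^2)" by simp
  have "(1-\<epsilon>)/2 * (2 * (\<Sum>i=1..n. m i * x i) - (\<Sum>i=1..n. (m i)^2)) \<le> (1-\<epsilon>)/2 * (\<Sum>i=1..n. (x i)^2)"
    using h assms by (intro mult_left_mono) auto
  moreover have "0 \<le> \<epsilon> / 2 * (\<Sum>i=1..n. x i)^2" using assms by simp
  moreover have "(1-\<epsilon>)/2 * (2 * (\<Sum>i=1..n. m i * x i) - (\<Sum>i=1..n. (m i)^2)) = (1-\<epsilon>) * (\<Sum>i=1..n. m i * x i) - (1-\<epsilon>)/2 * (\<Sum>i=1..n. (m i)^2)"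
    by (simp add: right_diff_distrib)
  ultimately show ?thesis unfolding f_eps_def by linarith
qed

theorem theorem2:
  fixes n t :: nat and \<epsilon> \<Gamma> :: real
  assumes "even n" and "n > 0"
    and "0 < \<epsilon>" and "\<epsilon> \<le> 1/18"
    and "\<Gamma> \<ge> 1"
  shows "measure_pmf.expectation (pmf_of_set (choice_seqs n t))
           (\<lambda>js. f_eps \<epsilon> n (cd_run \<epsilon> n \<Gamma> x_start js) - f_eps \<epsilon> n (\<lambda>_. 0))
         \<ge> (1 - 2 / real n * ((1 - \<epsilon>) / \<Gamma>)) ^ t * (f_eps \<epsilon> n x_start - f_eps \<epsilon> n (\<lambda>_. 0))"
proof -
  define C where "C = choice_seqs n t"
  define X where "X = cd_run \<epsilon> n \<Gamma> x_start"
  define a where "a = (1 - \<epsilon>) / (real n * \<Gamma>)"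
  define \<mu> where "\<mu> = (1 - a) ^ t"
  define N where "N = real (card C)"
  obtain k where k: "n = 2*k" using assms by blast
  have finC: "finite C" unfolding C_def by (rule fin_C)
  have cardC: "card C = n ^ t"
  proof -
    have "card {js. set js \<subseteq> {1..n} \<and> length js = t} = card {1..n} ^ t"
      by (rule card_lists_length_eq) simp
    then show ?thesis unfolding C_def choice_seqs_def by (simp add: conj_commute)
  qed
  have Npos: "N > 0" using cardC assms(2) by (simp add: N_def)
  have Cne: "C \<noteq> {}" using finC Npos N_def by auto
  have nr: "real n > 0" using assms by simp
  have a0: "0 \<le> a" using assms by (simp add: a_def)
  have a1: "a \<le> 1/2"
  proof -
    have "real n \<ge> 2" using assms k by simp
    then have "2 * 1 \<le> real n * \<Gamma>" using assms by (intro mult_mono) auto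
    then show ?thesis using assms nr by (simp add: a_def divide_simps)
  qed
  have ceq: "real n - (1 - \<epsilon>) / \<Gamma> = real n * (1 - a)"
    using nr assms by (simp add: a_def field_simps)
  have M: "\<And>i. i\<in>{1..n} \<Longrightarrow> (\<Sum>js\<in>C. X js i) = N * \<mu> * x_start i"
    using mean_lemma[OF assms(1), where t=t and \<epsilon>=\<epsilon> and \<Gamma>=\<Gamma>] unfolding ceq
    using cardC by (simp add: C_def X_def N_def \<mu>_def power_mult_distrib)
  define m where "m i = \<mu> * x_start i" for i
  have sq: "\<And>i. (x_start i)^2 = 1" by (simp add: x_start_def)
  have "(\<Sum>js\<in>C. f_eps \<epsilon> n (X js)) \<ge> (\<Sum>js\<in>C. (1-\<epsilon>) * (\<Sum>i=1..n. m i * X js i) - (1-\<epsilon>)/2 * (\<Sum>i=1..n. (m i)^2))"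
    using assms by (intro sum_mono lin_bound) auto
  also have "(\<Sum>js\<in>C. (1-\<epsilon>) * (\<Sum>i=1..n. m i * X js i) - (1-\<epsilon>)/2 * (\<Sum>i=1..n. (m i)^2))
     = (1-\<epsilon>) * (\<Sum>i=1..n. m i * (\<Sum>js\<in>C. X js i)) - N * ((1-\<epsilon>)/2 * (\<Sum>i=1..n. (m i)^2))"
    by (simp add: sum_subtractf sum_distrib_left N_def sum.swap[of _ C] mult.assoc)
  also have "(\<Sum>i=1..n. m i * (\<Sum>js\<in>C. X js i)) = (\<Sum>i=1..n. N * \<mu>^2)"
    by (rule sum.cong) (auto simp: M m_def power2_eq_square sq[unfolded power2_eq_square] algebra_simps)
  also have "(\<Sum>i=1..n. (m i)^2) = (\<Sum>i=1..n. \<mu>^2)"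
    by (rule sum.cong) (auto simp: m_def power_mult_distrib sq)
  finally have bound0: "(\<Sum>js\<in>C. f_eps \<epsilon> n (X js)) \<ge> (1-\<epsilon>) * (\<Sum>i=1..n. N * \<mu>^2) - N * ((1-\<epsilon>)/2 * (\<Sum>i=1..n. \<mu>^2))" .
  have "(1-\<epsilon>) * (\<Sum>i=1..n. N * \<mu>^2) - N * ((1-\<epsilon>)/2 * (\<Sum>i=1..n. \<mu>^2)) = N * (\<mu>^2 * ((1-\<epsilon>)/2 * real n))"
    by (simp add: field_simps)
  with bound0 have bound: "(\<Sum>js\<in>C. f_eps \<epsilon> n (X js)) \<ge> N * (\<mu>^2 * ((1-\<epsilon>)/2 * real n))" by linarith
  have f0: "f_eps \<epsilon> n (\<lambda>_. 0) = 0" by (simp add: f_eps_def)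
  have fx: "f_eps \<epsilon> n x_start = (1-\<epsilon>)/2 * real n"
    using xs_sum[of k] k by (simp add: f_eps_def sq)
  have E: "measure_pmf.expectation (pmf_of_set C) (\<lambda>js. f_eps \<epsilon> n (X js) - f_eps \<epsilon> n (\<lambda>_. 0))
      = (\<Sum>js\<in>C. f_eps \<epsilon> n (X js)) / N"
    using finC Cne by (simp add: integral_pmf_of_set f0 N_def)
  have "\<mu>^2 * ((1-\<epsilon>)/2 * real n) \<le> (\<Sum>js\<in>C. f_eps \<epsilon> n (X js)) / N"
    using bound Npos by (simp add: field_simps)
  moreover have "(1 - 2 * a) ^ t \<le> \<mu>^2"
  proof -
    have "(1 - 2*a)^t \<le> ((1-a)^2)^t"
      using a0 a1 by (intro power_mono) (auto simp: power2_eq_square algebra_simps)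
    then show ?thesis by (simp add: \<mu>_def power_mult[symmetric] mult.commute)
  qed
  moreover have "0 \<le> (1-\<epsilon>)/2 * real n" using assms by simp
  ultimately have "(1 - 2 * a) ^ t * ((1-\<epsilon>)/2 * real n) \<le> (\<Sum>js\<in>C. f_eps \<epsilon> n (X js)) / N"
    by (meson mult_right_mono order_trans)
  then have L: "(1 - 2 * a) ^ t * (f_eps \<epsilon> n x_start - f_eps \<epsilon> n (\<lambda>_. 0)) \<le> measure_pmf.expectation (pmf_of_set C) (\<lambda>js. f_eps \<epsilon> n (X js) - f_eps \<epsilon> n (\<lambda>_. 0))"
  proof -
    have "(1 - 2 * a) ^ t * (f_eps \<epsilon> n x_start - f_eps \<epsilon> n (\<lambda>_. 0)) = (1 - 2 * a) ^ t * ((1-\<epsilon>)/2 * real n)"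
      unfolding f0 fx by simp
    also have "\<dots> \<le> (\<Sum>js\<in>C. f_eps \<epsilon> n (X js)) / N" by fact
    also have "\<dots> = measure_pmf.expectation (pmf_of_set C) (\<lambda>js. f_eps \<epsilon> n (X js) - f_eps \<epsilon> n (\<lambda>_. 0))"
      by (rule E[symmetric])
    finally show ?thesis .
  qed
  have G: "2 / real n * ((1 - \<epsilon>) / \<Gamma>) = 2 * a" by (simp add: a_def)
  show ?thesis using L unfolding G C_def X_def .
qed

end
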